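(* Let $(X,d)$ be a bounded metric space and let $M: X\to\mathbb{R}$ satisfy $d(x,y)\le M(x)\le d(x,z)+M(z)$ for all $x,y,z\in X$. Let $d_S$ be the subset distance on $\mathcal{F}(X)$ defined in the context. Let $X_1,X_2\in\mathcal{F}(X)$ with $|X_1|\le|X_2|$, and let $X_2'\subseteq X_2$ satisfy $|X_1|\le|X_2'|$. Then $d_S(X_1,X_2')\le d_S(X_1,X_2)$.
   Context: $\mathcal{F}(X)$ denotes the set of all finite subsets of $X$. For $A,B\in\mathcal{F}(X)$ with $|A|\le|B|$ and an injection $\chi:A\to B$, define $d_\chi(A,B)=\sum_{x\in A} d(x,\chi(x))+\sum_{y\in B\setminus\chi(A)} M(y)$. The subset distance is $d_S(A,B)=d_S(B,A)=\min\{d_\chi(A,B) : \chi:A\to B \text{ an injection}\}$ (for $|A|\le|B|$). *)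

theory Defs
  imports "HOL-Analysis.Analysis"
begin

definition d_chi :: "('a::metric_space \<Rightarrow> real) \<Rightarrow> 'a set \<Rightarrow> 'a set \<Rightarrow> ('a \<Rightarrow> 'a) \<Rightarrow> real" where
  "d_chi M A B chi = (\<Sum>x\<in>A. dist x (chi x)) + (\<Sum>y\<in>B - chi ` A. M y)"

definition d_S_ord :: "('a::metric_space \<Rightarrow> real) \<Rightarrow> 'a set \<Rightarrow> 'a set \<Rightarrow> real" where
  "d_S_ord M A B = Min {d_chi M A B chi | chi. inj_on chi A \<and> chi ` A \<subseteq> B}"

definition d_S :: "('a::metric_space \<Rightarrow> real) \<Rightarrow> 'a set \<Rightarrow> 'a set \<Rightarrow> real" where
  "d_S M A B = (if card A \<le> card B then d_S_ord M A B else d_S_ord M B A)"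

end

theory Submission
  imports Defs
begin

lemma dS_set_fin:
  assumes "finite A" "finite B" "card A \<le> card B"
  shows "finite {d_chi M A B chi | chi. inj_on chi A \<and> chi ` A \<subseteq> B}"
    and "{d_chi M A B chi | chi. inj_on chi A \<and> chi ` A \<subseteq> B} \<noteq> {}"
proof -
  have "{d_chi M A B chi | chi. inj_on chi A \<and> chi ` A \<subseteq> B} \<subseteq> (\<lambda>f. d_chi M A B f) ` (A \<rightarrow>\<^sub>E B)"
  proof
    fix v assume "v \<in> {d_chi M A B chi | chi. inj_on chi A \<and> chi ` A \<subseteq> B}"
    then obtain chi where c: "inj_on chi A" "chi ` A \<subseteq> B" and v: "v = d_chi M A B chi" by blast
    have "restrict chi A \<in> A \<rightarrow>\<^sub>E B" using c by auto
    moreover have "d_chi M A B (restrict chi A) = d_chi M A B chi"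
      unfolding d_chi_def by (simp add: image_restrict_eq)
    ultimately show "v \<in> (\<lambda>f. d_chi M A B f) ` (A \<rightarrow>\<^sub>E B)" using v by (metis rev_image_eqI)
  qed
  moreover have "finite ((\<lambda>f. d_chi M A B f) ` (A \<rightarrow>\<^sub>E B))"
    using assms(1,2) by (intro finite_imageI finite_PiE)
  ultimately show "finite {d_chi M A B chi | chi. inj_on chi A \<and> chi ` A \<subseteq> B}"
    by (rule finite_subset)
  obtain f where "f ` A \<subseteq> B" "inj_on f A" using card_le_inj assms by blast
  then show "{d_chi M A B chi | chi. inj_on chi A \<and> chi ` A \<subseteq> B} \<noteq> {}" by blast
qed

lemma improve:
  fixes M :: "'a::metric_space \<Rightarrow> real"
  assumes M_cond: "\<And>x y z. dist x y \<le> M x \<and> M x \<le> dist x z + M z"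
    and fin1: "finite X1" and fin2: "finite X2"
    and sub: "X2' \<subseteq> X2"
    and card12': "card X1 \<le> card X2'"
    and inj: "inj_on chi X1" and im: "chi ` X1 \<subseteq> X2"
  shows "\<exists>chi'. inj_on chi' X1 \<and> chi' ` X1 \<subseteq> X2' \<and> d_chi M X1 X2' chi' \<le> d_chi M X1 X2 chi"
proof -
  have Mnn: "\<And>y. M y \<ge> 0" using M_cond[of y y for y] by simp
  define P where "P = {x\<in>X1. chi x \<notin> X2'}"
  define U where "U = X2' - chi ` X1"
  have finX2': "finite X2'" using fin2 sub finite_subset by blast
  have finP: "finite P" "finite (X1 - P)" using fin1 P_def by auto
  have finU: "finite U" using finX2' U_def by auto
  have c1: "card X1 = card (X1 - P) + card P"
  proof -
    have "P \<subseteq> X1" using P_def by auto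
    then have "card (X1 - P) = card X1 - card P" "card P \<le> card X1"
      using finP(1) fin1 by (simp_all add: card_Diff_subset card_mono)
    then show ?thesis by linarith
  qed
  have c2: "card (chi ` (X1 - P)) = card (X1 - P)"
    using inj by (meson Diff_subset card_image inj_on_subset)
  have "chi ` (X1 - P) \<union> U = X2'" using P_def U_def by auto
  moreover have "chi ` (X1 - P) \<inter> U = {}" using U_def by auto
  ultimately have "card (chi ` (X1 - P)) + card U = card X2'"
    using finX2' finU finP by (metis card_Un_disjoint finite_imageI)
  then have "card P \<le> card U" using c1 c2 card12' by linarith
  then obtain g where g: "g ` P \<subseteq> U" "inj_on g P" using card_le_inj finP finU by blast
  define chi' where "chi' = (\<lambda>x. if x \<in> P then g x else chi x)"
  have im': "chi' ` X1 = chi ` (X1 - P) \<union> g ` P"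
    unfolding chi'_def using P_def by (auto simp: image_def)
  have imsub: "chi' ` X1 \<subseteq> X2'" using im' g U_def P_def by auto
  have inj': "inj_on chi' X1"
  proof (rule inj_onI)
    fix x y assume xy: "x \<in> X1" "y \<in> X1" "chi' x = chi' y"
    show "x = y"
    proof (cases "x \<in> P"; cases "y \<in> P")
      assume "x \<in> P" "y \<in> P" then show ?thesis using xy g chi'_def by (auto dest: inj_onD)
    next
      assume "x \<notin> P" "y \<notin> P" then show ?thesis using xy inj chi'_def by (auto dest: inj_onD)
    next
      assume "x \<in> P" "y \<notin> P"
      then have "g x \<in> U" "chi' y = chi y" using g chi'_def by auto
      moreover have "chi y \<in> chi ` X1" using xy by blast
      moreover have "chi' x = g x" using \<open>x \<in> P\<close> chi'_def by simp
      ultimately have False using xy(3) U_def by (metis DiffD2)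
      then show ?thesis ..
    next
      assume "x \<notin> P" "y \<in> P"
      then have "g y \<in> U" "chi' x = chi x" using g chi'_def by auto
      moreover have "chi x \<in> chi ` X1" using xy by blast
      moreover have "chi' y = g y" using \<open>y \<in> P\<close> chi'_def by simp
      ultimately have False using xy(3) U_def by (metis DiffD2)
      then show ?thesis ..
    qed
  qed
  have diffeq: "X2' - chi' ` X1 = U - g ` P"
    unfolding im' U_def P_def by auto
  have s1: "(\<Sum>x\<in>X1. dist x (chi' x)) = (\<Sum>x\<in>X1 - P. dist x (chi x)) + (\<Sum>x\<in>P. dist x (g x))"
  proof -
    have "(\<Sum>x\<in>X1. dist x (chi' x)) = (\<Sum>x\<in>X1 - P. dist x (chi' x)) + (\<Sum>x\<in>P. dist x (chi' x))"
      using fin1 P_def by (metis (no_types, lifting) mem_Collect_eq subsetI sum.subset_diff)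
    moreover have "(\<Sum>x\<in>X1 - P. dist x (chi' x)) = (\<Sum>x\<in>X1 - P. dist x (chi x))"
      by (rule sum.cong) (auto simp: chi'_def)
    moreover have "(\<Sum>x\<in>P. dist x (chi' x)) = (\<Sum>x\<in>P. dist x (g x))"
      by (rule sum.cong) (auto simp: chi'_def)
    ultimately show ?thesis by simp
  qed
  have s2: "(\<Sum>x\<in>X1. dist x (chi x)) = (\<Sum>x\<in>X1 - P. dist x (chi x)) + (\<Sum>x\<in>P. dist x (chi x))"
    using fin1 P_def by (metis (no_types, lifting) mem_Collect_eq subsetI sum.subset_diff)
  have s3: "(\<Sum>x\<in>P. dist x (g x)) \<le> (\<Sum>x\<in>P. dist x (chi x)) + (\<Sum>x\<in>P. M (g x))"
  proof -
    have "\<And>x. dist x (g x) \<le> dist x (chi x) + M (g x)"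
    proof -
      fix x
      have "dist x (g x) \<le> dist x (chi x) + dist (chi x) (g x)" by (rule dist_triangle)
      moreover have "dist (chi x) (g x) \<le> M (g x)" using M_cond[of "g x" "chi x" "g x"] by (simp add: dist_commute)
      ultimately show "dist x (g x) \<le> dist x (chi x) + M (g x)" by linarith
    qed
    then have "(\<Sum>x\<in>P. dist x (g x)) \<le> (\<Sum>x\<in>P. dist x (chi x) + M (g x))" by (rule sum_mono)
    then show ?thesis by (simp add: sum.distrib)
  qed
  have s4: "(\<Sum>x\<in>P. M (g x)) = (\<Sum>y\<in>g ` P. M y)" using g(2) by (simp add: sum.reindex)
  have s5: "(\<Sum>y\<in>g ` P. M y) + (\<Sum>y\<in>U - g ` P. M y) = (\<Sum>y\<in>U. M y)"
    using g(1) finU by (metis add.commute sum.subset_diff)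
  have s6: "(\<Sum>y\<in>U. M y) \<le> (\<Sum>y\<in>X2 - chi ` X1. M y)"
    using sub U_def fin2 Mnn by (intro sum_mono2) auto
  have "d_chi M X1 X2' chi' \<le> d_chi M X1 X2 chi"
    unfolding d_chi_def diffeq s1 s2 using s3 s4 s5 s6 by linarith
  then show ?thesis using inj' imsub by blast
qed

theorem corollary2p4:
  fixes M :: "'a::metric_space \<Rightarrow> real"
    and X1 X2 X2' :: "'a set"
  assumes bdd: "bounded (UNIV :: 'a set)"
    and M_cond: "\<And>x y z. dist x y \<le> M x \<and> M x \<le> dist x z + M z"
    and fin1: "finite X1" and fin2: "finite X2"
    and card12: "card X1 \<le> card X2"
    and sub: "X2' \<subseteq> X2"
    and card12': "card X1 \<le> card X2'"
  shows "d_S M X1 X2' \<le> d_S M X1 X2"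
proof -
  have finX2': "finite X2'" using fin2 sub finite_subset by blast
  let ?S = "{d_chi M X1 X2 chi | chi. inj_on chi X1 \<and> chi ` X1 \<subseteq> X2}"
  let ?S' = "{d_chi M X1 X2' chi | chi. inj_on chi X1 \<and> chi ` X1 \<subseteq> X2'}"
  have "Min ?S \<in> ?S" using dS_set_fin[OF fin1 fin2 card12] by (rule Min_in)
  then obtain chi where c: "inj_on chi X1" "chi ` X1 \<subseteq> X2" "Min ?S = d_chi M X1 X2 chi" by auto
  obtain chi' where c': "inj_on chi' X1" "chi' ` X1 \<subseteq> X2'" "d_chi M X1 X2' chi' \<le> d_chi M X1 X2 chi"
    using improve[OF M_cond fin1 fin2 sub card12' c(1,2)] by blast
  have "Min ?S' \<le> d_chi M X1 X2' chi'"
    using dS_set_fin(1)[OF fin1 finX2' card12'] c'(1,2) by (intro Min_le) auto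
  moreover have "d_S M X1 X2' = Min ?S'" by (simp add: d_S_def d_S_ord_def card12')
  moreover have "d_S M X1 X2 = Min ?S" by (simp add: d_S_def d_S_ord_def card12)
  ultimately show ?thesis using c(3) c'(3) by linarith
qed

end
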